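(* Let $(\Phi,\Sigma_\Phi)$ be a measurable space, $\pi$ a probability measure on it, and $f\in\mathcal{F}_c$. Then for every probability measure $\nu$ on $(\Phi,\Sigma_\Phi)$ with $\mathcal{D}_f(\nu,\pi)<\infty$, $$\mathcal{D}_f(\nu,\pi)=\sup_h\Big\{\mathbb{E}_\nu[h]-\tilde{\mathcal{D}}_{f,\pi}^*(h)\Big\},$$ where the supremum is taken over all $\pi$-measurable functions $h\colon\Phi\to\mathbb{R}$.
   Context: $\mathcal{F}$ is the set of convex functions $f\colon\mathbb{R}\to\mathbb{R}\cup\{+\infty\}$ with $f(1)=0$, $f(x)\in\mathbb{R}$ for all $x>0$, and $f(x)=+\infty$ for all $x<0$; $\mathcal{F}_c$ is the subset of $f\in\mathcal{F}$ that are continuous on $[0,\infty)$, twice differentiable on $(0,\infty)$, and such that $1/f''$ is concave on $(0,\infty)$. The $f$-divergence is $\mathcal{D}_f(\nu,\mu)=\int f\big(\frac{\mathrm{d}\nu}{\mathrm{d}\mu}\big)\mathrm{d}\mu$ if $\nu\ll\mu$ and $+\infty$ otherwise. The Legendre transform is $f^*(t)=\sup_{x\geq 0}\{xt-f(x)\}$; $f'$ and ${f^*}'$ denote derivatives (or any element of the subdifferential where not differentiable), with $f'(0):=\inf\bigcup_{x>0}f'(x)$. Define $$\tilde{\mathcal{D}}_{f,\pi}^*(h):=\mathbb{E}_\pi[f^*(h)]+f'\big(\mathbb{E}_\pi[{f^*}'(h)]\big)-f^*\big(f'\big(\mathbb{E}_\pi[{f^*}'(h)]\big)\big),$$ with the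 conventions that $\tilde{\mathcal{D}}_{f,\pi}^*(h)=+\infty$ if $f^*(h)$ is not $\pi$-integrable, and $\tilde{\mathcal{D}}_{f,\pi}^*(h)=\mathbb{E}_\pi[f^*(h)]$ if ${f^*}'(h)$ is not $\pi$-integrable. $\mathbb{E}_\nu[\cdot]=\int\cdot\,\mathrm{d}\nu$, $\mathbb{E}_\pi[\cdot]=\int\cdot\,\mathrm{d}\pi$. *)

theory Defs
  imports "HOL-Probability.Probability"
begin

text \<open>The class F_c, for f given by its (finite) values on [0,\<infinity>); the value +\<infinity> on
  the negative reals is implicit (it never enters any of the quantities below).\<close>
definition Fc :: "(real \<Rightarrow> real) \<Rightarrow> bool" where
  "Fc f \<longleftrightarrow> convex_on {0..} f \<and> f 1 = 0 \<and> continuous_on {0..} f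
     \<and> (\<forall>x>0. (f has_real_derivative deriv f x) (at x))
     \<and> (\<forall>x>0. (deriv f has_real_derivative deriv (deriv f) x) (at x))
     \<and> (\<forall>x>0. deriv (deriv f) x \<noteq> 0)
     \<and> concave_on {0<..} (\<lambda>x. 1 / deriv (deriv f) x)"

definition fstar :: "(real \<Rightarrow> real) \<Rightarrow> real \<Rightarrow> ereal" where
  "fstar f t = (SUP x\<in>{0..}. ereal (x * t - f x))"

text \<open>s is a subgradient of f* at t (only required where f*(t) is finite).\<close>
definition fstar_subgrad :: "(real \<Rightarrow> real) \<Rightarrow> real \<Rightarrow> real \<Rightarrow> bool" where
  "fstar_subgrad f t s \<longleftrightarrow> (\<forall>u. fstar f u \<ge> fstar f t + ereal (s * (u - t)))"

definition fder :: "(real \<Rightarrow> real) \<Rightarrow> real \<Rightarrow> real" where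
  "fder f x = (if 0 < x then deriv f x else Inf (deriv f ` {0<..}))"

definition eint :: "'a measure \<Rightarrow> ('a \<Rightarrow> ereal) \<Rightarrow> ereal" where
  "eint M g = enn2ereal (\<integral>\<^sup>+ x. e2ennreal (g x) \<partial>M) - enn2ereal (\<integral>\<^sup>+ x. e2ennreal (- g x) \<partial>M)"

definition eintegrable :: "'a measure \<Rightarrow> ('a \<Rightarrow> ereal) \<Rightarrow> bool" where
  "eintegrable M g \<longleftrightarrow> g \<in> borel_measurable M
     \<and> (\<integral>\<^sup>+ x. e2ennreal (g x) \<partial>M) < \<infinity> \<and> (\<integral>\<^sup>+ x. e2ennreal (- g x) \<partial>M) < \<infinity>"

definition fdiv :: "(real \<Rightarrow> real) \<Rightarrow> 'a measure \<Rightarrow> 'a measure \<Rightarrow> ereal" where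
  "fdiv f N P = (if absolutely_continuous P N
     then eint P (\<lambda>x. ereal (f (enn2real (RN_deriv P N x)))) else \<infinity>)"

text \<open>The modified dual functional tilde-D*_{f,P}(h), for a chosen selection fsd of f*'.\<close>
definition Dtilde :: "(real \<Rightarrow> real) \<Rightarrow> (real \<Rightarrow> real) \<Rightarrow> 'a measure \<Rightarrow> ('a \<Rightarrow> real) \<Rightarrow> ereal" where
  "Dtilde f fsd P h =
     (if \<not> eintegrable P (\<lambda>x. fstar f (h x)) then \<infinity>
      else if \<not> integrable P (\<lambda>x. fsd (h x)) then eint P (\<lambda>x. fstar f (h x))
      else (let m = (\<integral>x. fsd (h x) \<partial>P) in
            eint P (\<lambda>x. fstar f (h x)) + ereal (fder f m) - fstar f (fder f m)))"

definition dual_obj :: "(real \<Rightarrow> real) \<Rightarrow> (real \<Rightarrow> real) \<Rightarrow> 'a measure \<Rightarrow> 'a measure \<Rightarrow> ('a \<Rightarrow> real) \<Rightarrow> ereal" where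
  "dual_obj f fsd N P h =
     (if Dtilde f fsd P h = \<infinity> then - \<infinity> else eint N (\<lambda>x. ereal (h x)) - Dtilde f fsd P h)"

end

theory Submission
  imports Defs
begin
lemma Fc_convex: "Fc f \<Longrightarrow> convex_on {0..} f" by (simp add: Fc_def)
lemma Fc_1: "Fc f \<Longrightarrow> f 1 = 0" by (simp add: Fc_def)
lemma Fc_cont: "Fc f \<Longrightarrow> continuous_on {0..} f" by (simp add: Fc_def)
lemma Fc_d1: "Fc f \<Longrightarrow> x > 0 \<Longrightarrow> (f has_real_derivative deriv f x) (at x)" by (simp add: Fc_def)
lemma Fc_d2: "Fc f \<Longrightarrow> x > 0 \<Longrightarrow> (deriv f has_real_derivative deriv (deriv f) x) (at x)" by (simp add: Fc_def)
lemma Fc_d2ne: "Fc f \<Longrightarrow> x > 0 \<Longrightarrow> deriv (deriv f) x \<noteq> 0" by (simp add: Fc_def)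
lemma Fc_conc: "Fc f \<Longrightarrow> concave_on {0<..} (\<lambda>x. 1 / deriv (deriv f) x)" by (simp add: Fc_def)

lemma Fc_tangent:
  assumes "Fc f" "y > 0" "x \<ge> 0"
  shows "f x \<ge> f y + deriv f y * (x - y)"
proof -
  have "f x - f y \<ge> deriv f y * (x - y)"
  proof (rule convex_on_imp_above_tangent[of "{0..}"])
    show "convex_on {0..} f" using Fc_convex[OF assms(1)] .
    show "connected {0::real..}" by simp
    show "y \<in> interior {0..}" using assms by simp
    show "x \<in> {0..}" using assms by simp
    show "(f has_real_derivative deriv f y) (at y within {0..})"
      using Fc_d1[OF assms(1,2)] by (rule has_field_derivative_at_within)
  qed
  then show ?thesis by simp
qed

lemma Fc_mono:
  assumes "Fc f" "0 < x" "x \<le> y"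
  shows "deriv f x \<le> deriv f y"
proof -
  have "f y \<ge> f x + deriv f x * (y - x)" using Fc_tangent[OF assms(1), of x y] assms by simp
  moreover have "f x \<ge> f y + deriv f y * (x - y)" using Fc_tangent[OF assms(1), of y x] assms by simp
  ultimately have "(deriv f y - deriv f x) * (y - x) \<ge> 0" by (simp add: algebra_simps)
  then show ?thesis using assms
    by (cases "x = y") (auto simp: zero_le_mult_iff)
qed

lemma Fc_d2pos:
  assumes "Fc f" "x > 0"
  shows "deriv (deriv f) x > 0"
proof (rule ccontr)
  assume "\<not> ?thesis"
  then have neg: "deriv (deriv f) x < 0" using Fc_d2ne[OF assms] by linarith
  obtain d where d: "d > 0" "\<And>h. h > 0 \<Longrightarrow> h < d \<Longrightarrow> deriv f (x + h) < deriv f x"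
    using DERIV_neg_dec_right[OF Fc_d2[OF assms] neg] by blast
  have "deriv f (x + d/2) < deriv f x" using d by simp
  moreover have "deriv f x \<le> deriv f (x + d/2)" using Fc_mono[OF assms(1), of x "x + d/2"] assms d by simp
  ultimately show False by simp
qed

lemma alg_persp:
  fixes C C1 C2 D1 D2 l :: real
  assumes "C1 > 0" "C2 > 0" "C \<ge> (1-l)*C1 + l*C2" "0 \<le> l" "l \<le> 1"
  shows "((1-l)*D1 + l*D2)^2 / C \<le> (1-l) * (D1^2/C1) + l * (D2^2/C2)"
proof -
  let ?M = "(1-l)*C1 + l*C2"
  have M: "?M > 0"
  proof (cases "l = 1")
    case True then show ?thesis using assms by simp
  next
    case False
    then have "(1-l)*C1 > 0" using assms by simp
    moreover have "l*C2 \<ge> 0" using assms by simp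
    ultimately show ?thesis by linarith
  qed
  have CM: "C > 0" using M assms by linarith
  have "((1-l)*D1 + l*D2)^2 / C \<le> ((1-l)*D1 + l*D2)^2 / ?M"
    using M assms(3) by (intro divide_left_mono) auto
  also have "\<dots> \<le> (1-l) * (D1^2/C1) + l * (D2^2/C2)"
  proof -
    have key: "((1-l)*D1 + l*D2)^2 * (C1*C2) \<le> ((1-l) * (D1^2*C2) + l * (D2^2*C1)) * ?M"
    proof -
      have "((1-l) * (D1^2*C2) + l * (D2^2*C1)) * ?M - ((1-l)*D1 + l*D2)^2 * (C1*C2)
            = (1-l)*l*(D1*C2 - D2*C1)^2"
        by (simp add: algebra_simps power2_eq_square)
      moreover have "(1-l)*l*(D1*C2 - D2*C1)^2 \<ge> 0" using assms by simp
      ultimately show ?thesis by linarith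
    qed
    have "((1-l)*D1 + l*D2)^2 / ?M \<le> ((1-l) * (D1^2*C2) + l * (D2^2*C1)) / (C1*C2)"
      using key M assms by (simp add: divide_simps)
    also have "\<dots> = (1-l) * (D1^2/C1) + l * (D2^2/C2)"
      using assms by (simp add: field_simps)
    finally show ?thesis .
  qed
  finally show ?thesis .
qed

lemma Fc_taylor:
  assumes "Fc f" "X > 0" "Y > 0"
  shows "((\<lambda>u. (1-u) * (X-Y)^2 * deriv (deriv f) (Y + u*(X-Y))) has_integral
           (f X - f Y - deriv f Y * (X - Y))) {0..1}"
proof -
  define W where "W u = (1-u)*(X-Y)* deriv f (Y + u*(X-Y)) + f (Y + u*(X-Y))" for u
  have pos: "Y + u*(X-Y) > 0" if "u \<in> {0..1}" for u
  proof -
    have "Y + u*(X-Y) = (1-u)*Y + u*X" by (simp add: algebra_simps)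
    moreover have "(1-u)*Y + u*X > 0" using that assms
      by (cases "u = 0") (auto intro: add_nonneg_pos add_pos_nonneg)
    ultimately show ?thesis by simp
  qed
  have "((\<lambda>u. (1-u) * (X-Y)^2 * deriv (deriv f) (Y + u*(X-Y))) has_integral (W 1 - W 0)) {0..1}"
  proof (rule fundamental_theorem_of_calculus)
    fix u :: real assume u: "u \<in> {0..1}"
    have dZ: "((\<lambda>u. Y + u*(X-Y)) has_real_derivative (X-Y)) (at u)"
      by (auto intro!: derivative_eq_intros)
    have d1: "((\<lambda>u. deriv f (Y + u*(X-Y))) has_real_derivative deriv (deriv f) (Y + u*(X-Y)) * (X-Y)) (at u)"
      by (rule DERIV_chain2[OF Fc_d2[OF assms(1) pos[OF u]] dZ])
    have d0: "((\<lambda>u. f (Y + u*(X-Y))) has_real_derivative deriv f (Y + u*(X-Y)) * (X-Y)) (at u)"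
      by (rule DERIV_chain2[OF Fc_d1[OF assms(1) pos[OF u]] dZ])
    have da: "((\<lambda>u. (1-u)*(X-Y)) has_real_derivative (-(X-Y))) (at u)"
      by (auto intro!: derivative_eq_intros)
    have "(W has_real_derivative ((-(X-Y)) * deriv f (Y + u*(X-Y)) + (deriv (deriv f) (Y + u*(X-Y)) * (X-Y)) * ((1-u)*(X-Y))
          + deriv f (Y + u*(X-Y)) * (X-Y))) (at u)"
      unfolding W_def by (rule DERIV_add[OF DERIV_mult[OF da d1] d0])
    then have "(W has_real_derivative (1-u) * (X-Y)^2 * deriv (deriv f) (Y + u*(X-Y))) (at u)"
      by (rule DERIV_cong) (simp add: algebra_simps power2_eq_square)
    then show "(W has_vector_derivative (1-u) * (X-Y)^2 * deriv (deriv f) (Y + u*(X-Y))) (at u within {0..1})"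
      by (simp add: has_real_derivative_iff_has_vector_derivative has_vector_derivative_at_within)
  qed simp
  moreover have "W 1 - W 0 = f X - f Y - deriv f Y * (X - Y)" by (simp add: W_def algebra_simps)
  ultimately show ?thesis by simp
qed

lemma conv_pos: fixes p q u w :: real
  assumes "p > 0" "q > 0" "u \<ge> 0" "w \<ge> 0" "u + w = 1" shows "u*p + w*q > 0"
proof (cases "u = 0")
  case True then show ?thesis using assms by simp
next
  case False then have "u*p > 0" using assms by simp
  moreover have "w*q \<ge> 0" using assms by simp
  ultimately show ?thesis by linarith
qed

lemma Fc_core:
  assumes f: "Fc f" and pos: "x > 0" "y > 0" "x0 > 0" "y0 > 0"
  shows "f x - f y - deriv f y * (x - y) \<ge> (f x0 - f y0 - deriv f y0 * (x0 - y0))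
           + (deriv f x0 - deriv f y0) * (x - x0) - deriv (deriv f) y0 * (x0 - y0) * (y - y0)"
proof -
  define a where "a = x - x0"
  define b where "b = y - y0"
  define X where "X t = x0 + t*a" for t
  define Y where "Y t = y0 + t*b" for t
  define A where "A = {t. 0 < X t \<and> 0 < Y t}"
  define \<phi> where "\<phi> t = f (X t) - f (Y t) - deriv f (Y t) * (X t - Y t)" for t
  define k where "k t u = (1-u) * (X t - Y t)^2 * deriv (deriv f) (Y t + u*(X t - Y t))" for t u
  define \<psi> where "\<psi> z = 1 / deriv (deriv f) z" for z
  have int: "(k t has_integral \<phi> t) {0..1}" if "t \<in> A" for t
    using Fc_taylor[OF f, of "X t" "Y t"] that unfolding k_def \<phi>_def A_def by simp
  have Zpos: "Y t + u*(X t - Y t) > 0" if "t \<in> A" "u \<in> {0..1}" for t u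
  proof -
    have "Y t + u*(X t - Y t) = (1-u)*Y t + u*X t" by (simp add: algebra_simps)
    moreover have "(1-u)*Y t + u*X t > 0" using that conv_pos[of "Y t" "X t" "1-u" u] unfolding A_def by auto
    ultimately show ?thesis by simp
  qed
  have Xc: "X ((1-l)*t1 + l*t2) = (1-l)*X t1 + l*X t2" for l t1 t2 unfolding X_def by (simp add: algebra_simps)
  have Yc: "Y ((1-l)*t1 + l*t2) = (1-l)*Y t1 + l*Y t2" for l t1 t2 unfolding Y_def by (simp add: algebra_simps)
  have Acomb: "(1-l)*t1 + l*t2 \<in> A" if "t1 \<in> A" "t2 \<in> A" "0 \<le> l" "l \<le> 1" for l t1 t2
    using that conv_pos[of "X t1" "X t2" "1-l" l] conv_pos[of "Y t1" "Y t2" "1-l" l]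
    unfolding A_def by (auto simp: Xc Yc)
  have convA: "convex A"
    unfolding convex_alt using Acomb by (simp add: mult.commute)
  have cvx: "convex_on A \<phi>"
  proof (rule convex_onI[OF _ convA])
    fix l t1 t2 :: real assume l: "0 < l" "l < 1" and t: "t1 \<in> A" "t2 \<in> A"
    let ?tl = "(1-l)*t1 + l*t2"
    have tl: "?tl \<in> A" using Acomb t l by simp
    have i1: "((\<lambda>u. (1-l) * k t1 u + l * k t2 u) has_integral ((1-l) * \<phi> t1 + l * \<phi> t2)) {0..1}"
      by (intro has_integral_add has_integral_mult_right int t)
    have le: "k ?tl u \<le> (1-l) * k t1 u + l * k t2 u" if u: "u \<in> {0..1}" for u
    proof -
      define Z where "Z t = Y t + u*(X t - Y t)" for t
      define D where "D t = X t - Y t" for t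
      have Zl: "Z ?tl = (1-l) * Z t1 + l * Z t2" unfolding Z_def Xc Yc by (simp add: algebra_simps)
      have Dl: "D ?tl = (1-l) * D t1 + l * D t2" unfolding D_def Xc Yc by (simp add: algebra_simps)
      have Z1: "Z t1 > 0" and Z2: "Z t2 > 0" and Z3: "Z ?tl > 0"
        using Zpos[OF t(1) u] Zpos[OF t(2) u] Zpos[OF tl u] unfolding Z_def by auto
      have conc: "\<psi> (Z ?tl) \<ge> (1-l) * \<psi> (Z t1) + l * \<psi> (Z t2)"
        using concave_onD[OF Fc_conc[OF f], of l "Z t1" "Z t2"] l Z1 Z2 unfolding Zl \<psi>_def by simp
      have p1: "\<psi> (Z t1) > 0" and p2: "\<psi> (Z t2) > 0" and p3: "\<psi> (Z ?tl) > 0"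
        using Fc_d2pos[OF f Z1] Fc_d2pos[OF f Z2] Fc_d2pos[OF f Z3] unfolding \<psi>_def by auto
      have kk: "k t u = (1-u) * (D t ^2 / \<psi> (Z t))" for t
        unfolding k_def D_def Z_def \<psi>_def by simp
      have "D ?tl ^2 / \<psi> (Z ?tl) \<le> (1-l) * (D t1^2/\<psi> (Z t1)) + l * (D t2^2/\<psi> (Z t2))"
        unfolding Dl using alg_persp[OF p1 p2 conc] l by simp
      then have "(1-u) * (D ?tl ^2 / \<psi> (Z ?tl)) \<le> (1-u) * ((1-l) * (D t1^2/\<psi> (Z t1)) + l * (D t2^2/\<psi> (Z t2)))"
        using u by (intro mult_left_mono) auto
      then show ?thesis unfolding kk by (simp add: algebra_simps)
    qed
    have "\<phi> ?tl \<le> (1-l) * \<phi> t1 + l * \<phi> t2"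
      by (rule has_integral_le[OF int[OF tl] i1 le])
    then show "\<phi> ((1 - l) *\<^sub>R t1 + l *\<^sub>R t2) \<le> (1 - l) * \<phi> t1 + l * \<phi> t2" by simp
  qed
  have openA: "open A"
    unfolding A_def X_def Y_def
    by (intro open_Int[of "{t. 0 < x0 + t*a}" "{t. 0 < y0 + t*b}", unfolded Int_def mem_Collect_eq, simplified]
        open_Collect_less continuous_intros)
  have X0: "X 0 = x0" and Y0: "Y 0 = y0" and X1: "X 1 = x" and Y1: "Y 1 = y"
    unfolding X_def Y_def a_def b_def by auto
  have A0: "0 \<in> A" and A1: "1 \<in> A" unfolding A_def using X0 Y0 X1 Y1 pos by auto
  have dX: "(X has_real_derivative a) (at 0)" unfolding X_def by (auto intro!: derivative_eq_intros)
  have dY: "(Y has_real_derivative b) (at 0)" unfolding Y_def by (auto intro!: derivative_eq_intros)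
  have dfX: "((\<lambda>t. f (X t)) has_real_derivative deriv f x0 * a) (at 0)"
    using DERIV_chain2[OF Fc_d1[OF f, of "X 0"] dX] X0 pos by simp
  have dfY: "((\<lambda>t. f (Y t)) has_real_derivative deriv f y0 * b) (at 0)"
    using DERIV_chain2[OF Fc_d1[OF f, of "Y 0"] dY] Y0 pos by simp
  have df'Y: "((\<lambda>t. deriv f (Y t)) has_real_derivative deriv (deriv f) y0 * b) (at 0)"
    using DERIV_chain2[OF Fc_d2[OF f, of "Y 0"] dY] Y0 pos by simp
  have dXY: "((\<lambda>t. X t - Y t) has_real_derivative a - b) (at 0)" by (rule DERIV_diff[OF dX dY])
  have "(\<phi> has_real_derivative (deriv f x0 * a - deriv f y0 * b
          - (deriv (deriv f) y0 * b * (X 0 - Y 0) + (a - b) * deriv f (Y 0)))) (at 0)"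
    unfolding \<phi>_def by (rule DERIV_diff[OF DERIV_diff[OF dfX dfY] DERIV_mult[OF df'Y dXY]])
  then have d\<phi>: "(\<phi> has_real_derivative ((deriv f x0 - deriv f y0) * a - deriv (deriv f) y0 * (x0 - y0) * b)) (at 0)"
    by (rule DERIV_cong) (simp add: X0 Y0 algebra_simps)
  have "\<phi> 1 - \<phi> 0 \<ge> ((deriv f x0 - deriv f y0) * a - deriv (deriv f) y0 * (x0 - y0) * b) * (1 - 0)"
  proof (rule convex_on_imp_above_tangent[OF cvx])
    show "connected A" using convA by (rule convex_connected)
    show "0 \<in> interior A" using openA A0 by (simp add: interior_open)
    show "1 \<in> A" by (rule A1)
    show "(\<phi> has_real_derivative ((deriv f x0 - deriv f y0) * a - deriv (deriv f) y0 * (x0 - y0) * b)) (at 0 within A)"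
      using d\<phi> by (rule has_field_derivative_at_within)
  qed
  then show ?thesis unfolding \<phi>_def X0 Y0 X1 Y1 a_def b_def by (simp add: algebra_simps)
qed

lemma right_limit_le:
  fixes F G :: "real \<Rightarrow> real"
  assumes "(F \<longlongrightarrow> a) (at_right 0)" "(G \<longlongrightarrow> b) (at_right 0)" "\<And>x. x > 0 \<Longrightarrow> x < 1 \<Longrightarrow> G x \<le> F x"
  shows "b \<le> a"
proof (rule tendsto_le[OF trivial_limit_at_right_real assms(1,2)])
  show "\<forall>\<^sub>F x in at_right 0. G x \<le> F x"
    unfolding eventually_at_right_field using assms(3) by (intro exI[of _ 1]) auto
qed

lemma Fc_right0: "Fc f \<Longrightarrow> (f \<longlongrightarrow> f 0) (at_right 0)"
proof -
  assume f: "Fc f"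
  have "(f \<longlongrightarrow> f 0) (at 0 within {0..})"
    using Fc_cont[OF f] by (simp add: continuous_on_def)
  then show ?thesis by (rule tendsto_within_subset) auto
qed

lemma Fc_core_x0:
  assumes f: "Fc f" and pos: "x \<ge> 0" "y > 0" "x0 > 0" "y0 > 0"
  shows "f x - f y - deriv f y * (x - y) \<ge> (f x0 - f y0 - deriv f y0 * (x0 - y0))
           + (deriv f x0 - deriv f y0) * (x - x0) - deriv (deriv f) y0 * (x0 - y0) * (y - y0)"
proof (cases "x > 0")
  case True then show ?thesis using Fc_core[OF f True pos(2-4)] by simp
next
  case False
  then have x: "x = 0" using pos by simp
  show ?thesis unfolding x
  proof (rule right_limit_le)
    show "((\<lambda>x. f x - f y - deriv f y * (x - y)) \<longlongrightarrow> f 0 - f y - deriv f y * (0 - y)) (at_right 0)"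
      by (intro tendsto_intros Fc_right0[OF f])
    show "((\<lambda>x. (f x0 - f y0 - deriv f y0 * (x0 - y0))
           + (deriv f x0 - deriv f y0) * (x - x0) - deriv (deriv f) y0 * (x0 - y0) * (y - y0)) \<longlongrightarrow>
          (f x0 - f y0 - deriv f y0 * (x0 - y0))
           + (deriv f x0 - deriv f y0) * (0 - x0) - deriv (deriv f) y0 * (x0 - y0) * (y - y0)) (at_right 0)"
      by (intro tendsto_intros)
  qed (use Fc_core[OF f _ pos(2-4)] in auto)
qed

lemma Fc_yf'y:
  assumes f: "Fc f" and t: "\<And>y. y > 0 \<Longrightarrow> t \<le> deriv f y"
  shows "((\<lambda>y. y * deriv f y) \<longlongrightarrow> 0) (at_right 0)"
proof (rule tendsto_sandwich)
  show "\<forall>\<^sub>F y in at_right 0. y * t \<le> y * deriv f y"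
    unfolding eventually_at_right_field using t by (intro exI[of _ 1]) (auto intro: mult_left_mono)
  show "\<forall>\<^sub>F y in at_right 0. y * deriv f y \<le> y * deriv f 1"
    unfolding eventually_at_right_field using Fc_mono[OF f] by (intro exI[of _ 1]) (auto intro: mult_left_mono)
  have "((\<lambda>y. y * t) \<longlongrightarrow> 0 * t) (at_right 0)" by (intro tendsto_intros)
  then show "((\<lambda>y. y * t) \<longlongrightarrow> 0) (at_right (0::real))" by simp
  have "((\<lambda>y. y * deriv f 1) \<longlongrightarrow> 0 * deriv f 1) (at_right 0)" by (intro tendsto_intros)
  then show "((\<lambda>y. y * deriv f 1) \<longlongrightarrow> 0) (at_right (0::real))" by simp
qed

lemma Fc_core_q0:
  assumes f: "Fc f" and t: "\<And>y. y > 0 \<Longrightarrow> t \<le> deriv f y" and pos: "x \<ge> 0" "x0 > 0" "y0 > 0"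
  shows "f x - f 0 - t * x \<ge> (f x0 - f y0 - deriv f y0 * (x0 - y0))
           + (deriv f x0 - deriv f y0) * (x - x0) - deriv (deriv f) y0 * (x0 - y0) * (0 - y0)"
proof (rule right_limit_le)
  show "((\<lambda>y. f x - f 0 - t * x) \<longlongrightarrow> f x - f 0 - t * x) (at_right 0)" by simp
  have "((\<lambda>y. (f x0 - f y0 - deriv f y0 * (x0 - y0))
           + (deriv f x0 - deriv f y0) * (x - x0) - deriv (deriv f) y0 * (x0 - y0) * (y - y0)
           + (f y - f 0 - y * deriv f y)) \<longlongrightarrow>
        (f x0 - f y0 - deriv f y0 * (x0 - y0))
           + (deriv f x0 - deriv f y0) * (x - x0) - deriv (deriv f) y0 * (x0 - y0) * (0 - y0)
           + (f 0 - f 0 - 0)) (at_right 0)"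
    by (intro tendsto_intros Fc_right0[OF f] Fc_yf'y[OF f t])
  then show "((\<lambda>y. (f x0 - f y0 - deriv f y0 * (x0 - y0))
           + (deriv f x0 - deriv f y0) * (x - x0) - deriv (deriv f) y0 * (x0 - y0) * (y - y0)
           + (f y - f 0 - y * deriv f y)) \<longlongrightarrow>
        (f x0 - f y0 - deriv f y0 * (x0 - y0))
           + (deriv f x0 - deriv f y0) * (x - x0) - deriv (deriv f) y0 * (x0 - y0) * (0 - y0)) (at_right 0)"
    by simp
  fix y :: real assume y: "y > 0" "y < 1"
  have c: "f x - f y - deriv f y * (x - y) \<ge> (f x0 - f y0 - deriv f y0 * (x0 - y0))
           + (deriv f x0 - deriv f y0) * (x - x0) - deriv (deriv f) y0 * (x0 - y0) * (y - y0)"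
    by (rule Fc_core_x0[OF f pos(1) y(1) pos(2,3)])
  have "(deriv f y - t) * x \<ge> 0" using t[OF y(1)] pos by simp
  then have "f x - f 0 - t * x \<ge> f x - f y - deriv f y * (x - y) + (f y - f 0 - y * deriv f y)"
    by (simp add: algebra_simps)
  with c show "(f x0 - f y0 - deriv f y0 * (x0 - y0))
           + (deriv f x0 - deriv f y0) * (x - x0) - deriv (deriv f) y0 * (x0 - y0) * (y - y0)
           + (f y - f 0 - y * deriv f y) \<le> f x - f 0 - t * x" by linarith
qed

lemma fstar_ge: "x \<ge> 0 \<Longrightarrow> ereal (x * t - f x) \<le> fstar f t"
  unfolding fstar_def by (rule SUP_upper) simp

lemma fstar_le: "(\<And>x. x \<ge> 0 \<Longrightarrow> x * t - f x \<le> c) \<Longrightarrow> fstar f t \<le> ereal c"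
  unfolding fstar_def by (rule SUP_least) simp

lemma fstar_not_minf: "fstar f t \<noteq> -\<infinity>"
  using fstar_ge[of 0 t f] by auto

lemma fstar_ge_id: "Fc f \<Longrightarrow> ereal c \<le> fstar f c"
  using fstar_ge[of 1 c f] Fc_1[of f] by simp

lemma Fc_ge_lin: "Fc f \<Longrightarrow> x \<ge> 0 \<Longrightarrow> f x \<ge> deriv f 1 * (x - 1)"
  using Fc_tangent[of f 1 x] Fc_1[of f] by simp

lemma fstar_bound_left:
  assumes f: "Fc f" and u: "u \<le> deriv f 1"
  shows "fstar f u \<le> ereal (deriv f 1)"
proof (rule fstar_le)
  fix x :: real assume x: "x \<ge> 0"
  have "x * u \<le> x * deriv f 1" using x u by (intro mult_left_mono)
  then show "x * u - f x \<le> deriv f 1" using Fc_ge_lin[OF f x] by (simp add: algebra_simps)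
qed

lemma Fc_q0_bound:
  assumes f: "Fc f" and e: "e > 0"
  shows "\<exists>u. fstar f u \<le> ereal (- f 0 + e)"
proof -
  have "continuous_on {0..} f" by (rule Fc_cont[OF f])
  then have "\<forall>x\<in>{0..}. \<forall>\<epsilon>>0. \<exists>\<delta>>0. \<forall>x'\<in>{0..}. dist x' x < \<delta> \<longrightarrow> dist (f x') (f x) < \<epsilon>"
    unfolding continuous_on_iff .
  then have "\<forall>\<epsilon>>0. \<exists>\<delta>>0. \<forall>x'\<in>{0..}. dist x' 0 < \<delta> \<longrightarrow> dist (f x') (f 0) < \<epsilon>"
    by (rule bspec) simp
  then have "\<exists>\<delta>>0. \<forall>x'\<in>{0..}. dist x' 0 < \<delta> \<longrightarrow> dist (f x') (f 0) < e"
    using e by blast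
  then obtain d where d: "d > 0" "\<And>x'. x' \<in> {0..} \<Longrightarrow> dist x' 0 < d \<Longrightarrow> dist (f x') (f 0) < e"
    by blast
  define \<delta> where "\<delta> = min (d/2) 1"
  have \<delta>: "\<delta> > 0" "\<delta> < d" using d unfolding \<delta>_def by auto
  define s where "s = (f \<delta> - f 0) / \<delta>"
  have chord: "f x - f 0 \<ge> s * x" if x: "x \<ge> \<delta>" for x
  proof -
    have xp: "x > 0" using x \<delta> by simp
    have "f ((1 - \<delta>/x) *\<^sub>R 0 + (\<delta>/x) *\<^sub>R x) \<le> (1 - \<delta>/x) * f 0 + (\<delta>/x) * f x"
      using convex_onD[OF Fc_convex[OF f], of "\<delta>/x" 0 x] x xp \<delta> by simp
    then have "f \<delta> \<le> (1 - \<delta>/x) * f 0 + (\<delta>/x) * f x" using xp by simp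
    then have "f \<delta> - f 0 \<le> (\<delta>/x) * (f x - f 0)" by (simp add: algebra_simps)
    then have "x * (f \<delta> - f 0) \<le> \<delta> * (f x - f 0)" using xp by (simp add: field_simps)
    then have "(f \<delta> - f 0) / \<delta> * x \<le> f x - f 0" using \<delta> by (simp add: field_simps)
    then show ?thesis unfolding s_def by (simp add: mult.commute)
  qed
  show ?thesis
  proof (intro exI fstar_le)
    fix x :: real assume x: "x \<ge> 0"
    show "x * min s 0 - f x \<le> - f 0 + e"
    proof (cases "x \<le> \<delta>")
      case True
      have "dist (f x) (f 0) < e" using d(2)[of x] x True \<delta> by (simp add: dist_real_def)
      then have "- f x < - f 0 + e" by (simp add: dist_real_def abs_less_iff)
      moreover have "x * min s 0 \<le> 0" using x by (simp add: mult_nonneg_nonpos)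
      ultimately show ?thesis by linarith
    next
      case False
      have "x * min s 0 \<le> x * s" using x by (intro mult_left_mono) auto
      then show ?thesis using chord[of x] False e by (simp add: mult.commute)
    qed
  qed
qed

lemma Fc_fenchel:
  assumes f: "Fc f" and r: "fstar f t = ereal r" and sg: "fstar_subgrad f t q"
  shows "q \<ge> 0 \<and> r = q * t - f q"
proof -
  have sg': "ereal (r + q * (u - t)) \<le> fstar f u" for u
    using sg r unfolding fstar_subgrad_def by (metis plus_ereal.simps(1))
  have q: "q \<ge> 0"
  proof (rule ccontr)
    assume "\<not> q \<ge> 0"
    then have qn: "q < 0" by simp
    define K where "K = \<bar>r\<bar> + \<bar>deriv f 1\<bar> + 1"
    define u where "u = min t (deriv f 1) - K / (-q)"
    have "t - u \<ge> K / (-q)" unfolding u_def by simp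
    then have "(-q) * (t - u) \<ge> (-q) * (K / (-q))" using qn by (intro mult_left_mono) auto
    then have "q * (u - t) \<ge> K" using qn by (simp add: algebra_simps)
    then have "r + q * (u - t) > deriv f 1" unfolding K_def by linarith
    moreover have "K / (-q) > 0" unfolding K_def using qn by (intro divide_pos_pos) auto
    then have "u \<le> deriv f 1" unfolding u_def by linarith
    then have "fstar f u \<le> ereal (deriv f 1)" by (rule fstar_bound_left[OF f])
    from order_trans[OF sg'[of u] this] have "r + q * (u - t) \<le> deriv f 1" by simp
    ultimately show False by linarith
  qed
  have "r \<le> q * t - f q"
  proof (cases "q > 0")
    case True
    define u where "u = deriv f q"
    have "fstar f u \<le> ereal (q * u - f q)"
    proof (rule fstar_le)
      fix x :: real assume "x \<ge> 0"
      then have "f x \<ge> f q + u * (x - q)" using Fc_tangent[OF f True] unfolding u_def by simp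
      then show "x * u - f x \<le> q * u - f q" by (simp add: algebra_simps)
    qed
    from order_trans[OF sg'[of u] this] have "r + q * (u - t) \<le> q * u - f q" by simp
    then show ?thesis by (simp add: algebra_simps)
  next
    case False
    then have q0: "q = 0" using q by simp
    have "r \<le> - f 0 + e" if e: "e > 0" for e
    proof -
      obtain u where "fstar f u \<le> ereal (- f 0 + e)" using Fc_q0_bound[OF f e] by blast
      from order_trans[OF sg'[of u] this] have "r + q * (u - t) \<le> - f 0 + e" by simp
      then show ?thesis using q0 by simp
    qed
    then have "r \<le> - f 0" by (rule field_le_epsilon)
    then show ?thesis using q0 by simp
  qed
  moreover have "q * t - f q \<le> r" using fstar_ge[OF q, of t f] r by simp
  ultimately show ?thesis using q by simp
qed

lemma Fc_fenchel_sub: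
  assumes f: "Fc f" and r: "fstar f t = ereal r" and sg: "fstar_subgrad f t q" and z: "z \<ge> 0"
  shows "f z \<ge> f q + t * (z - q)"
proof -
  have "z * t - f z \<le> r" using fstar_ge[OF z, of t f] r by simp
  then show ?thesis using Fc_fenchel[OF f r sg] by (simp add: algebra_simps)
qed

lemma Fc_fenchel_pos:
  assumes f: "Fc f" and r: "fstar f t = ereal r" and sg: "fstar_subgrad f t q" and qp: "q > 0"
  shows "t = deriv f q"
proof -
  have "deriv f q - t = 0"
  proof (rule DERIV_local_min[OF _ qp])
    show "((\<lambda>z. f z - t * z) has_real_derivative deriv f q - t) (at q)"
      using Fc_d1[OF f qp] by (auto intro!: derivative_eq_intros)
    show "\<forall>y. \<bar>q - y\<bar> < q \<longrightarrow> f q - t * q \<le> f y - t * y"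
    proof (intro allI impI)
      fix y assume "\<bar>q - y\<bar> < q"
      then have "y \<ge> 0" by simp
      then have "f y \<ge> f q + t * (y - q)" by (rule Fc_fenchel_sub[OF f r sg])
      then show "f q - t * q \<le> f y - t * y" by (simp add: right_diff_distrib)
    qed
  qed
  then show ?thesis by simp
qed

lemma Fc_fenchel_zero:
  assumes f: "Fc f" and r: "fstar f t = ereal r" and sg: "fstar_subgrad f t 0" and y: "y > 0"
  shows "t \<le> deriv f y"
proof -
  have "f y \<ge> f 0 + t * y" using Fc_fenchel_sub[OF f r sg, of y] y by simp
  moreover have "f 0 \<ge> f y + deriv f y * (0 - y)" using Fc_tangent[OF f y, of 0] by simp
  ultimately have "t * y \<le> deriv f y * y" by (simp add: algebra_simps)
  then show ?thesis using y by simp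
qed

lemma Fc_lb0:
  assumes f: "Fc f" and c: "\<And>y. y > 0 \<Longrightarrow> c \<le> deriv f y" and x: "x \<ge> 0"
  shows "f x \<ge> f 0 + c * x"
proof -
  have "0 \<le> f x - f 0 - c * x"
  proof (rule right_limit_le)
    show "((\<lambda>y. f x - f 0 - c * x) \<longlongrightarrow> f x - f 0 - c * x) (at_right 0)" by simp
    have "((\<lambda>y. f y - f 0 - y * deriv f y) \<longlongrightarrow> f 0 - f 0 - 0) (at_right 0)"
      by (intro tendsto_intros Fc_right0[OF f] Fc_yf'y[OF f c])
    then show "((\<lambda>y. f y - f 0 - y * deriv f y) \<longlongrightarrow> 0) (at_right 0)" by simp
    fix y :: real assume y: "0 < y" "y < 1"
    have "f x \<ge> f y + deriv f y * (x - y)" by (rule Fc_tangent[OF f y(1) x])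
    moreover have "(deriv f y - c) * x \<ge> 0" using c[OF y(1)] x by simp
    ultimately show "f y - f 0 - y * deriv f y \<le> f x - f 0 - c * x" by (simp add: algebra_simps)
  qed
  then show ?thesis by simp
qed

lemma PW_main:
  assumes f: "Fc f" and r: "fstar f t = ereal r" and sg: "fstar_subgrad f t q" and x: "x \<ge> 0" and m: "m > 0"
  shows "x * t - r \<le> f x - (f 1 - f m - deriv f m * (1 - m)) - (deriv f 1 - deriv f m) * (x - 1)
                       + deriv (deriv f) m * (1 - m) * (q - m)"
proof -
  have fq: "q \<ge> 0" "r = q * t - f q" using Fc_fenchel[OF f r sg] by auto
  show ?thesis
  proof (cases "q > 0")
    case True
    have tq: "t = deriv f q" by (rule Fc_fenchel_pos[OF f r sg True])
    have "f x - f q - deriv f q * (x - q) \<ge> (f 1 - f m - deriv f m * (1 - m))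
           + (deriv f 1 - deriv f m) * (x - 1) - deriv (deriv f) m * (1 - m) * (q - m)"
      by (rule Fc_core_x0[OF f x True _ m]) simp
    then show ?thesis using fq(2) tq by (simp add: algebra_simps)
  next
    case False
    then have q0: "q = 0" using fq by simp
    have sg0: "fstar_subgrad f t 0" using sg q0 by simp
    have "f x - f 0 - t * x \<ge> (f 1 - f m - deriv f m * (1 - m))
           + (deriv f 1 - deriv f m) * (x - 1) - deriv (deriv f) m * (1 - m) * (0 - m)"
      by (rule Fc_core_q0[OF f Fc_fenchel_zero[OF f r sg0] x _ m]) simp_all
    then show ?thesis using fq(2) q0 by (simp add: algebra_simps)
  qed
qed

lemma PW_FY:
  assumes r: "fstar f t = ereal r" and x: "x \<ge> 0"
  shows "x * t - r \<le> f x"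
  using fstar_ge[OF x, of t f] r by simp

lemma fder_pos: "m > 0 \<Longrightarrow> fder f m = deriv f m"
  by (simp add: fder_def)

lemma fstar_deriv:
  assumes f: "Fc f" and m: "m > 0"
  shows "fstar f (deriv f m) = ereal (m * deriv f m - f m)"
proof (rule antisym)
  show "fstar f (deriv f m) \<le> ereal (m * deriv f m - f m)"
  proof (rule fstar_le)
    fix x :: real assume "x \<ge> 0"
    then have "f x \<ge> f m + deriv f m * (x - m)" by (rule Fc_tangent[OF f m])
    then show "x * deriv f m - f x \<le> m * deriv f m - f m" by (simp add: algebra_simps)
  qed
  show "ereal (m * deriv f m - f m) \<le> fstar f (deriv f m)"
    using fstar_ge[of m "deriv f m" f] m by simp
qed

lemma fder0:
  assumes f: "Fc f" and t: "\<And>y. y > 0 \<Longrightarrow> t \<le> deriv f y"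
  shows "t \<le> fder f 0" "\<And>y. y > 0 \<Longrightarrow> fder f 0 \<le> deriv f y" "fstar f (fder f 0) = ereal (- f 0)"
proof -
  have bdd: "bdd_below (deriv f ` {0<..})" using t by (auto intro!: bdd_belowI)
  show t0: "t \<le> fder f 0" unfolding fder_def using t by (auto intro!: cInf_greatest)
  show c: "\<And>y. y > 0 \<Longrightarrow> fder f 0 \<le> deriv f y" unfolding fder_def using bdd by (auto intro!: cInf_lower)
  show "fstar f (fder f 0) = ereal (- f 0)"
  proof (rule antisym)
    show "fstar f (fder f 0) \<le> ereal (- f 0)"
    proof (rule fstar_le)
      fix x :: real assume "x \<ge> 0"
      then show "x * fder f 0 - f x \<le> - f 0" using Fc_lb0[OF f, of "fder f 0" x] c by (simp add: algebra_simps)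
    qed
    show "ereal (- f 0) \<le> fstar f (fder f 0)" using fstar_ge[of 0 "fder f 0" f] by simp
  qed
qed

lemma PW_zero:
  assumes f: "Fc f" and r: "fstar f t = ereal r" and sg: "fstar_subgrad f t 0" and x: "x \<ge> 0"
    and c: "t \<le> c"
  shows "x * t - r \<le> f x + c + f 0 + (c - deriv f 1) * (x - 1)"
proof -
  have r0: "r = - f 0" using Fc_fenchel[OF f r sg] by simp
  have "x * t \<le> x * c" using x c by (intro mult_left_mono)
  moreover have "f x \<ge> deriv f 1 * (x - 1)" by (rule Fc_ge_lin[OF f x])
  ultimately show ?thesis using r0 by (simp add: algebra_simps)
qed

lemma enn2ereal_fin: "(a::ennreal) \<noteq> \<infinity> \<Longrightarrow> enn2ereal a = ereal (enn2real a)"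
  by (cases a rule: ennreal_cases) auto

lemma eint_real:
  assumes "integrable M X"
  shows "eint M (\<lambda>x. ereal (X x)) = ereal (\<integral>x. X x \<partial>M)"
proof -
  have "(\<integral>\<^sup>+ x. ennreal (X x) \<partial>M) \<noteq> \<infinity>" "(\<integral>\<^sup>+ x. ennreal (- X x) \<partial>M) \<noteq> \<infinity>"
    using assms by (auto simp: real_integrable_def)
  then show ?thesis
    unfolding eint_def real_lebesgue_integral_def[OF assms]
    by (simp add: enn2ereal_fin)
qed

lemma eint_cong_AE:
  assumes a: "AE x in M. H x = H' x" shows "eint M H = eint M H'"
proof -
  have 1: "AE x in M. e2ennreal (H x) = e2ennreal (H' x)" using a by (rule eventually_mono) simp
  have 2: "AE x in M. e2ennreal (- H x) = e2ennreal (- H' x)" using a by (rule eventually_mono) simp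
  show ?thesis unfolding eint_def using nn_integral_cong_AE[OF 1] nn_integral_cong_AE[OF 2] by simp
qed

lemma eint_le:
  assumes X: "X \<in> borel_measurable M" and Y: "integrable M Y" and le: "AE x in M. X x \<le> Y x"
  shows "eint M (\<lambda>x. ereal (X x)) \<le> ereal (\<integral>x. Y x \<partial>M)"
proof (cases "integrable M X")
  case True
  then show ?thesis using integral_mono_AE[OF True Y le] by (simp add: eint_real)
next
  case False
  have "(\<integral>\<^sup>+ x. ennreal (X x) \<partial>M) \<le> (\<integral>\<^sup>+ x. ennreal (Y x) \<partial>M)"
    using le by (intro nn_integral_mono_AE) (auto intro: ennreal_leI)
  moreover have "(\<integral>\<^sup>+ x. ennreal (Y x) \<partial>M) \<noteq> \<infinity>" using Y by (auto simp: real_integrable_def)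
  ultimately have fin: "(\<integral>\<^sup>+ x. ennreal (X x) \<partial>M) \<noteq> \<infinity>" by (auto simp: top_unique)
  then have inf: "(\<integral>\<^sup>+ x. ennreal (- X x) \<partial>M) = \<infinity>" using False X by (auto simp: real_integrable_def)
  have "eint M (\<lambda>x. ereal (X x)) = -\<infinity>"
    unfolding eint_def using fin inf by (simp add: enn2ereal_fin)
  then show ?thesis by simp
qed

lemma eint_fin:
  assumes E: "eintegrable M H" and nm: "\<And>x. H x \<noteq> -\<infinity>"
  shows "integrable M (\<lambda>x. real_of_ereal (H x))"
    and "eint M H = ereal (\<integral>x. real_of_ereal (H x) \<partial>M)"
    and "AE x in M. H x = ereal (real_of_ereal (H x))"
proof -
  have Hm: "H \<in> borel_measurable M" and p: "(\<integral>\<^sup>+ x. e2ennreal (H x) \<partial>M) < \<infinity>"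
    and n: "(\<integral>\<^sup>+ x. e2ennreal (- H x) \<partial>M) < \<infinity>"
    using E unfolding eintegrable_def by auto
  have "AE x in M. e2ennreal (H x) \<noteq> \<infinity>"
    using p by (intro nn_integral_PInf_AE) (auto intro: measurable_compose[OF Hm measurable_e2ennreal])
  then show ae: "AE x in M. H x = ereal (real_of_ereal (H x))"
  proof (rule eventually_mono)
    fix x assume "e2ennreal (H x) \<noteq> \<infinity>"
    then have "H x \<noteq> \<infinity>" by auto
    then show "H x = ereal (real_of_ereal (H x))" using nm[of x] by (cases "H x") auto
  qed
  have eq: "eint M H = eint M (\<lambda>x. ereal (real_of_ereal (H x)))"
    by (rule eint_cong_AE[OF ae])
  have int: "integrable M (\<lambda>x. real_of_ereal (H x))"
    unfolding real_integrable_def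
  proof (intro conjI)
    show "(\<lambda>x. real_of_ereal (H x)) \<in> borel_measurable M" using Hm by measurable
    have "(\<integral>\<^sup>+ x. ennreal (real_of_ereal (H x)) \<partial>M) = (\<integral>\<^sup>+ x. e2ennreal (H x) \<partial>M)"
      using ae by (intro nn_integral_cong_AE) (rule eventually_mono, assumption, metis e2ennreal_ereal)
    then show "(\<integral>\<^sup>+ x. ennreal (real_of_ereal (H x)) \<partial>M) \<noteq> \<infinity>" using p by simp
    have "(\<integral>\<^sup>+ x. ennreal (- real_of_ereal (H x)) \<partial>M) = (\<integral>\<^sup>+ x. e2ennreal (- H x) \<partial>M)"
    proof (rule nn_integral_cong_AE)
      show "AE x in M. ennreal (- real_of_ereal (H x)) = e2ennreal (- H x)"
        using ae by (rule eventually_mono) (metis e2ennreal_ereal uminus_ereal.simps(1))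
    qed
    then show "(\<integral>\<^sup>+ x. ennreal (- real_of_ereal (H x)) \<partial>M) \<noteq> \<infinity>" using n by simp
  qed
  then show "integrable M (\<lambda>x. real_of_ereal (H x))" .
  show "eint M H = ereal (\<integral>x. real_of_ereal (H x) \<partial>M)" using eq eint_real[OF int] by simp
qed

lemma ereal_le_minus: "a \<le> ereal (b + c) \<Longrightarrow> a - ereal c \<le> ereal b"
  by (cases a) auto

lemma RN_setup:
  assumes P: "prob_space P" and N: "prob_space N" and sets: "sets N = sets P"
    and ac: "absolutely_continuous P N"
  defines "g \<equiv> \<lambda>x. enn2real (RN_deriv P N x)"
  shows "g \<in> borel_measurable P" and "\<And>x. g x \<ge> 0" and "integrable P g" and "(\<integral>x. g x \<partial>P) = 1"
    and "\<And>h. h \<in> borel_measurable P \<Longrightarrow> eint N (\<lambda>x. ereal (h x)) = eint P (\<lambda>x. ereal (g x * h x))"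
proof -
  interpret P: prob_space P by fact
  interpret N: prob_space N by fact
  show gm: "g \<in> borel_measurable P" unfolding g_def by measurable
  show gp: "\<And>x. g x \<ge> 0" unfolding g_def by simp
  have "AE x in P. RN_deriv P N x \<noteq> \<infinity>"
    by (rule P.RN_deriv_finite[OF _ ac sets]) (simp add: N.sigma_finite_measure_axioms)
  then have ae: "AE x in P. RN_deriv P N x = ennreal (g x)"
    by (rule eventually_mono) (simp add: g_def ennreal_enn2real_if)
  have nn: "(\<integral>\<^sup>+ x. ennreal (h x) \<partial>N) = (\<integral>\<^sup>+ x. ennreal (g x * h x) \<partial>P)"
    if hm: "h \<in> borel_measurable P" for h
  proof -
    have "(\<integral>\<^sup>+ x. ennreal (h x) \<partial>N) = (\<integral>\<^sup>+ x. RN_deriv P N x * ennreal (h x) \<partial>P)"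
      by (rule P.RN_deriv_nn_integral[OF ac sets]) (use hm in measurable)
    also have "\<dots> = (\<integral>\<^sup>+ x. ennreal (g x * h x) \<partial>P)"
    proof (rule nn_integral_cong_AE)
      show "AE x in P. RN_deriv P N x * ennreal (h x) = ennreal (g x * h x)"
        using ae
      proof (rule eventually_mono)
        fix x assume e: "RN_deriv P N x = ennreal (g x)"
        show "RN_deriv P N x * ennreal (h x) = ennreal (g x * h x)"
        proof (cases "h x \<ge> 0")
          case True then show ?thesis using e gp[of x] by (simp add: ennreal_mult)
        next
          case False
          then have "g x * h x \<le> 0" using gp[of x] by (simp add: mult_nonneg_nonpos)
          then show ?thesis using False by (simp add: ennreal_neg)
        qed
      qed
    qed
    finally show ?thesis .
  qed
  show "eint N (\<lambda>x. ereal (h x)) = eint P (\<lambda>x. ereal (g x * h x))" if hm: "h \<in> borel_measurable P" for h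
  proof -
    have hm': "(\<lambda>x. - h x) \<in> borel_measurable P" using hm by measurable
    show ?thesis unfolding eint_def using nn[OF hm] nn[OF hm'] by simp
  qed
  have n1: "(\<integral>\<^sup>+ x. ennreal (g x) \<partial>P) = 1"
  proof -
    have "(\<integral>\<^sup>+ x. ennreal (g x) \<partial>P) = (\<integral>\<^sup>+ x. ennreal (g x * 1) \<partial>P)" by simp
    also have "\<dots> = (\<integral>\<^sup>+ x. ennreal 1 \<partial>N)" using nn[of "\<lambda>_. 1"] by simp
    also have "\<dots> = 1" using N.emeasure_space_1 by simp
    finally show ?thesis .
  qed
  have n2: "(\<integral>\<^sup>+ x. ennreal (- g x) \<partial>P) = 0"
    using gp by (simp add: ennreal_neg)
  show gi: "integrable P g" unfolding real_integrable_def using gm n1 n2 by simp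
  show "(\<integral>x. g x \<partial>P) = 1" using real_lebesgue_integral_def[OF gi] n1 n2 by simp
qed

lemma Fc_comp_meas:
  assumes f: "Fc f" and gm: "g \<in> borel_measurable M" and gp: "\<And>x. g x \<ge> 0"
  shows "(\<lambda>x. f (g x)) \<in> borel_measurable M"
proof -
  have "continuous_on UNIV (\<lambda>x. f (max 0 x))"
    by (rule continuous_on_compose2[OF Fc_cont[OF f]]) (auto intro!: continuous_intros)
  then have "(\<lambda>x. f (max 0 x)) \<in> borel_measurable borel" by (rule borel_measurable_continuous_onI)
  then have "(\<lambda>x. f (max 0 (g x))) \<in> borel_measurable M" using gm by (rule measurable_compose[rotated])
  moreover have "(\<lambda>x. f (max 0 (g x))) = (\<lambda>x. f (g x))" using gp by (simp add: max_absorb2)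
  ultimately show ?thesis by simp
qed

lemma fdiv_setup:
  assumes f: "Fc f" and P: "prob_space P" and N: "prob_space N" and sets: "sets N = sets P"
    and fin: "fdiv f N P < \<infinity>"
  defines "g \<equiv> \<lambda>x. enn2real (RN_deriv P N x)"
  shows "absolutely_continuous P N" and "integrable P (\<lambda>x. f (g x))"
    and "fdiv f N P = ereal (\<integral>x. f (g x) \<partial>P)"
proof -
  interpret P: prob_space P by fact
  show ac: "absolutely_continuous P N" using fin unfolding fdiv_def by (auto split: if_splits)
  note RN = RN_setup[OF P N sets ac, folded g_def]
  have gp: "\<And>x. g x \<ge> 0" unfolding g_def by simp
  have Fm: "(\<lambda>x. f (g x)) \<in> borel_measurable P" by (rule Fc_comp_meas[OF f RN(1) gp])
  have bi: "integrable P (\<lambda>x. \<bar>deriv f 1\<bar> * (g x + 1))"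
    using RN(3) by (intro integrable_mult_right integrable_add) auto
  have "(\<integral>\<^sup>+ x. ennreal (- f (g x)) \<partial>P) \<le> (\<integral>\<^sup>+ x. ennreal (\<bar>deriv f 1\<bar> * (g x + 1)) \<partial>P)"
  proof (intro nn_integral_mono ennreal_leI)
    fix x
    have "f (g x) \<ge> deriv f 1 * (g x - 1)" by (rule Fc_ge_lin[OF f gp])
    moreover have "- (deriv f 1 * (g x - 1)) \<le> \<bar>deriv f 1\<bar> * (g x + 1)"
    proof -
      have "- (deriv f 1 * (g x - 1)) \<le> \<bar>deriv f 1 * (g x - 1)\<bar>" by simp
      also have "\<dots> = \<bar>deriv f 1\<bar> * \<bar>g x - 1\<bar>" by (simp add: abs_mult)
      also have "\<dots> \<le> \<bar>deriv f 1\<bar> * (g x + 1)" using gp[of x] by (intro mult_left_mono) auto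
      finally show ?thesis .
    qed
    ultimately show "- f (g x) \<le> \<bar>deriv f 1\<bar> * (g x + 1)" by linarith
  qed
  moreover have "(\<integral>\<^sup>+ x. ennreal (\<bar>deriv f 1\<bar> * (g x + 1)) \<partial>P) \<noteq> \<infinity>"
    using bi[unfolded real_integrable_def] by blast
  ultimately have neg: "(\<integral>\<^sup>+ x. ennreal (- f (g x)) \<partial>P) \<noteq> \<infinity>" by (auto simp: top_unique)
  have pos: "(\<integral>\<^sup>+ x. ennreal (f (g x)) \<partial>P) \<noteq> \<infinity>"
  proof
    assume inf: "(\<integral>\<^sup>+ x. ennreal (f (g x)) \<partial>P) = \<infinity>"
    have "fdiv f N P = eint P (\<lambda>x. ereal (f (g x)))" unfolding fdiv_def g_def using ac by simp
    also have "\<dots> = \<infinity>" unfolding eint_def using inf neg by (simp add: enn2ereal_fin)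
    finally show False using fin by simp
  qed
  show Fi: "integrable P (\<lambda>x. f (g x))" unfolding real_integrable_def using Fm pos neg by simp
  have "fdiv f N P = eint P (\<lambda>x. ereal (f (g x)))" unfolding fdiv_def g_def using ac by simp
  then show "fdiv f N P = ereal (\<integral>x. f (g x) \<partial>P)" using eint_real[OF Fi] by simp
qed

lemma upper_bound:
  assumes f: "Fc f" and P: "prob_space P"
    and sg: "\<And>t. fstar f t \<noteq> \<infinity> \<Longrightarrow> fstar_subgrad f t (fsd t)"
    and gm: "g \<in> borel_measurable P" and gp: "\<And>x. g x \<ge> 0" and gi: "integrable P g"
    and g1: "(\<integral>x. g x \<partial>P) = 1"
    and eN: "eint N (\<lambda>x. ereal (h x)) = eint P (\<lambda>x. ereal (g x * h x))"
    and Fi: "integrable P (\<lambda>x. f (g x))"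
    and hm: "h \<in> borel_measurable P"
  shows "dual_obj f fsd N P h \<le> ereal (\<integral>x. f (g x) \<partial>P)"
proof (cases "Dtilde f fsd P h = \<infinity>")
  case True then show ?thesis by (simp add: dual_obj_def)
next
  case False
  interpret P: prob_space P by fact
  have E: "eintegrable P (\<lambda>x. fstar f (h x))" using False unfolding Dtilde_def by (auto split: if_splits)
  define Hr where "Hr x = real_of_ereal (fstar f (h x))" for x
  note EF = eint_fin[OF E fstar_not_minf, folded Hr_def]
  have Hi: "integrable P Hr" using EF(1) unfolding Hr_def by simp
  have eH: "eint P (\<lambda>x. fstar f (h x)) = ereal (\<integral>x. Hr x \<partial>P)" using EF(2) unfolding Hr_def by simp
  have good: "AE x in P. fstar f (h x) = ereal (Hr x) \<and> fstar_subgrad f (h x) (fsd (h x))"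
    using EF(3)[unfolded Hr_def]
  proof (rule eventually_mono)
    fix x assume e: "fstar f (h x) = ereal (real_of_ereal (fstar f (h x)))"
    then have "fstar f (h x) \<noteq> \<infinity>" by (cases "fstar f (h x)") auto
    then show "fstar f (h x) = ereal (Hr x) \<and> fstar_subgrad f (h x) (fsd (h x))"
      using sg e unfolding Hr_def by blast
  qed
  have ghm: "(\<lambda>x. g x * h x) \<in> borel_measurable P" using gm hm by measurable
  have Fint: "(\<integral>x. f (g x) \<partial>P) = (\<integral>x. f (g x) \<partial>P)" ..
  have dual: "dual_obj f fsd N P h = eint P (\<lambda>x. ereal (g x * h x)) - Dtilde f fsd P h"
    using False eN by (simp add: dual_obj_def)
  show ?thesis
  proof (cases "integrable P (\<lambda>x. fsd (h x))")
    case False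
    have D: "Dtilde f fsd P h = ereal (\<integral>x. Hr x \<partial>P)" using E False eH by (simp add: Dtilde_def)
    have "eint P (\<lambda>x. ereal (g x * h x)) \<le> ereal (\<integral>x. f (g x) + Hr x \<partial>P)"
    proof (rule eint_le[OF ghm])
      show "integrable P (\<lambda>x. f (g x) + Hr x)" using Fi Hi by simp
      show "AE x in P. g x * h x \<le> f (g x) + Hr x"
        using good
      proof (rule eventually_mono)
        fix x assume gx: "fstar f (h x) = ereal (Hr x) \<and> fstar_subgrad f (h x) (fsd (h x))"
        from PW_FY[OF gx[THEN conjunct1] gp[of x]] show "g x * h x \<le> f (g x) + Hr x" by simp
      qed
    qed
    also have "\<dots> = ereal ((\<integral>x. f (g x) \<partial>P) + (\<integral>x. Hr x \<partial>P))" using Fi Hi by simp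
    finally show ?thesis unfolding dual D by (rule ereal_le_minus)
  next
    case True
    note qi = True
    define m where "m = (\<integral>x. fsd (h x) \<partial>P)"
    have qnn: "AE x in P. fsd (h x) \<ge> 0"
      using good by (rule eventually_mono) (use Fc_fenchel[OF f] in blast)
    have m0: "m \<ge> 0" unfolding m_def using qnn by (rule integral_nonneg_AE)
    have D: "Dtilde f fsd P h = ereal (\<integral>x. Hr x \<partial>P) + ereal (fder f m) - fstar f (fder f m)"
      using E qi eH by (simp add: Dtilde_def m_def Let_def)
    show ?thesis
    proof (cases "m > 0")
      case True
      define K where "K = f 1 - f m - deriv f m * (1 - m)"
      define Y where "Y x = f (g x) + Hr x - K - (deriv f 1 - deriv f m) * (g x - 1)
                       + deriv (deriv f) m * (1 - m) * (fsd (h x) - m)" for x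
      have Yi: "integrable P Y" unfolding Y_def using Fi Hi gi qi by simp
      have IY: "(\<integral>x. Y x \<partial>P) = (\<integral>x. f (g x) \<partial>P) + ((\<integral>x. Hr x \<partial>P) - K)"
        unfolding Y_def using Fi Hi gi qi g1 by (simp add: m_def[symmetric] algebra_simps P.prob_space)
      have D': "Dtilde f fsd P h = ereal ((\<integral>x. Hr x \<partial>P) - K)"
        unfolding D fder_pos[OF True] fstar_deriv[OF f True] K_def using Fc_1[OF f]
        by (simp add: algebra_simps)
      have "eint P (\<lambda>x. ereal (g x * h x)) \<le> ereal (\<integral>x. Y x \<partial>P)"
      proof (rule eint_le[OF ghm Yi])
        show "AE x in P. g x * h x \<le> Y x"
          using good
        proof (rule eventually_mono)
          fix x assume gx: "fstar f (h x) = ereal (Hr x) \<and> fstar_subgrad f (h x) (fsd (h x))"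
          show "g x * h x \<le> Y x"
            using PW_main[OF f gx[THEN conjunct1] gx[THEN conjunct2] gp[of x] True]
            unfolding Y_def K_def by (simp add: algebra_simps)
        qed
      qed
      then show ?thesis unfolding dual D' IY by (rule ereal_le_minus)
    next
      case False
      then have mz: "m = 0" using m0 by simp
      have "AE x in P. fsd (h x) = 0"
        using integral_nonneg_eq_0_iff_AE[OF qi qnn] mz unfolding m_def by simp
      then have good0: "AE x in P. fstar f (h x) = ereal (Hr x) \<and> fstar_subgrad f (h x) 0"
        using good by eventually_elim simp
      obtain x0 where "fstar f (h x0) = ereal (Hr x0) \<and> fstar_subgrad f (h x0) 0"
      proof -
        { assume "\<forall>x\<in>space P. \<not> (fstar f (h x) = ereal (Hr x) \<and> fstar_subgrad f (h x) 0)"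
          then have "AE x in P. \<not> (fstar f (h x) = ereal (Hr x) \<and> fstar_subgrad f (h x) 0)"
            by (intro AE_I2) auto
          then have False using P.AE_contr[OF good0] by simp }
        then show ?thesis using that by blast
      qed
      then have t0: "\<And>y. y > 0 \<Longrightarrow> h x0 \<le> deriv f y"
        using Fc_fenchel_zero[OF f] by blast
      define c where "c = fder f 0"
      note c = fder0[OF f t0, folded c_def]
      have D': "Dtilde f fsd P h = ereal ((\<integral>x. Hr x \<partial>P) + c + f 0)"
        unfolding D mz c_def[symmetric] using c(3) c_def by simp
      define Y where "Y x = f (g x) + Hr x + c + f 0 + (c - deriv f 1) * (g x - 1)" for x
      have Yi: "integrable P Y" unfolding Y_def using Fi Hi gi by simp
      have IY: "(\<integral>x. Y x \<partial>P) = (\<integral>x. f (g x) \<partial>P) + ((\<integral>x. Hr x \<partial>P) + c + f 0)"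
        unfolding Y_def using Fi Hi gi g1 by (simp add: algebra_simps P.prob_space)
      have "eint P (\<lambda>x. ereal (g x * h x)) \<le> ereal (\<integral>x. Y x \<partial>P)"
      proof (rule eint_le[OF ghm Yi])
        show "AE x in P. g x * h x \<le> Y x"
          using good0
        proof (rule eventually_mono)
          fix x assume gx: "fstar f (h x) = ereal (Hr x) \<and> fstar_subgrad f (h x) 0"
          have "h x \<le> c"
            using fder0(1)[OF f Fc_fenchel_zero[OF f gx[THEN conjunct1] gx[THEN conjunct2]]] c_def by simp
          from PW_zero[OF f gx[THEN conjunct1] gx[THEN conjunct2] gp[of x] this]
          show "g x * h x \<le> Y x" unfolding Y_def by (simp add: algebra_simps)
        qed
      qed
      then show ?thesis unfolding dual D' IY by (rule ereal_le_minus)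
    qed
  qed
qed

lemma Fc_yf'y_gen:
  assumes f: "Fc f"
  shows "((\<lambda>y. y * deriv f y) \<longlongrightarrow> 0) (at_right 0)"
proof (rule tendsto_sandwich)
  show "\<forall>\<^sub>F y in at_right 0. f y - f 0 \<le> y * deriv f y"
    unfolding eventually_at_right_field
    by (intro exI[of _ 1]) (use Fc_tangent[OF f, of _ 0] in \<open>auto simp: algebra_simps\<close>)
  show "\<forall>\<^sub>F y in at_right 0. y * deriv f y \<le> y * deriv f 1"
    unfolding eventually_at_right_field using Fc_mono[OF f] by (intro exI[of _ 1]) (auto intro: mult_left_mono)
  have "((\<lambda>y. f y - f 0) \<longlongrightarrow> f 0 - f 0) (at_right 0)" by (intro tendsto_intros Fc_right0[OF f])
  then show "((\<lambda>y. f y - f 0) \<longlongrightarrow> 0) (at_right 0)" by simp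
  have "((\<lambda>y. y * deriv f 1) \<longlongrightarrow> 0 * deriv f 1) (at_right 0)" by (intro tendsto_intros)
  then show "((\<lambda>y. y * deriv f 1) \<longlongrightarrow> 0) (at_right (0::real))" by simp
qed

lemma Fc_deriv_cont: "Fc f \<Longrightarrow> continuous_on {0<..} (deriv f)"
  by (rule DERIV_continuous_on[of _ _ "deriv (deriv f)"]) (auto intro: has_field_derivative_at_within Fc_d2)

lemma ereal_minus_bound:
  assumes "D \<le> ereal X" "D \<noteq> \<infinity>"
  shows "ereal (A - X) \<le> ereal A - D"
  using assms by (cases D) auto

lemma lower_bound:
  assumes f: "Fc f" and P: "prob_space P"
    and gm: "g \<in> borel_measurable P" and gp: "\<And>x. g x \<ge> 0" and gi: "integrable P g"
    and eN: "\<And>h. h \<in> borel_measurable P \<Longrightarrow> eint N (\<lambda>x. ereal (h x)) = eint P (\<lambda>x. ereal (g x * h x))"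
    and Fi: "integrable P (\<lambda>x. f (g x))"
  shows "ereal (\<integral>x. f (g x) \<partial>P) \<le> (SUP h\<in>borel_measurable P. dual_obj f fsd N P h)"
proof -
  interpret P: prob_space P by fact
  define a where "a n = 1 / real (Suc n)" for n
  define b where "b n = real (Suc n)" for n
  define c where "c n x = max (a n) (min (b n) (g x))" for n x
  define hn where "hn n x = deriv f (c n x)" for n x
  define T where "T n x = f (c n x) + deriv f (c n x) * (g x - c n x)" for n x
  define Hn where "Hn n x = c n x * hn n x - f (c n x)" for n x
  have ap: "a n > 0" "a n \<le> 1" for n unfolding a_def by auto
  have bp: "b n \<ge> 1" for n unfolding b_def by auto
  have cp: "c n x > 0" "a n \<le> c n x" "c n x \<le> b n" for n x
    unfolding c_def using ap[of n] bp[of n] by auto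
  have clipc: "continuous_on UNIV (\<lambda>y. max (a n) (min (b n) y))" for n by (intro continuous_intros)
  have clipr: "(\<lambda>y. max (a n) (min (b n) y)) ` UNIV \<subseteq> {0<..}" for n using ap[of n] by auto
  have hm: "hn n \<in> borel_measurable P" for n
  proof -
    have "continuous_on UNIV (\<lambda>y. deriv f (max (a n) (min (b n) y)))"
      by (rule continuous_on_compose2[OF Fc_deriv_cont[OF f] clipc clipr])
    then have "(\<lambda>y. deriv f (max (a n) (min (b n) y))) \<in> borel_measurable borel"
      by (rule borel_measurable_continuous_onI)
    from measurable_compose[OF gm this] show ?thesis unfolding hn_def c_def .
  qed
  have fcm: "(\<lambda>x. f (c n x)) \<in> borel_measurable P" for n
  proof -
    have "continuous_on UNIV (\<lambda>y. f (max (a n) (min (b n) y)))"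
      by (rule continuous_on_compose2[OF Fc_cont[OF f] clipc]) (use ap[of n] in auto)
    then have "(\<lambda>y. f (max (a n) (min (b n) y))) \<in> borel_measurable borel"
      by (rule borel_measurable_continuous_onI)
    from measurable_compose[OF gm this] show ?thesis unfolding c_def .
  qed
  have cm: "c n \<in> borel_measurable P" for n unfolding c_def using gm by measurable
  have Tm: "T n \<in> borel_measurable P" for n
    unfolding T_def using fcm[of n] hm[of n] cm[of n] gm unfolding hn_def by measurable
  define w where "w x = \<bar>f (g x)\<bar> + \<bar>deriv f 1 * (g x - 1)\<bar>" for x
  have wi: "integrable P w" unfolding w_def using Fi gi by simp
  have Tle: "T n x \<le> f (g x)" for n x
    unfolding T_def using Fc_tangent[OF f cp(1) gp] by simp
  have Tge: "T n x \<ge> deriv f 1 * (g x - 1)" for n x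
  proof -
    have A: "f (c n x) \<ge> deriv f 1 * (c n x - 1)" using Fc_ge_lin[OF f] cp(1)[of n x] by simp
    have B: "(deriv f (c n x) - deriv f 1) * (g x - c n x) \<ge> 0"
    proof (cases "g x" "c n x" rule: linorder_cases)
      case less
      then have "c n x = a n" unfolding c_def by auto
      then have "c n x \<le> 1" using ap by simp
      then have "deriv f (c n x) \<le> deriv f 1" using Fc_mono[OF f cp(1)] by simp
      then show ?thesis using less by (intro mult_nonpos_nonpos) auto
    next
      case equal then show ?thesis by simp
    next
      case greater
      then have "c n x = b n" unfolding c_def using ap[of n] bp[of n] by auto
      then have "c n x \<ge> 1" using bp by simp
      then have "deriv f (c n x) \<ge> deriv f 1" using Fc_mono[OF f] by simp
      then show ?thesis using greater by simp
    qed
    show ?thesis unfolding T_def using A B by (simp add: algebra_simps)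
  qed
  have Tb: "norm (T n x) \<le> w x" for n x
  proof -
    have 1: "T n x \<le> f (g x)" by (rule Tle)
    have 2: "T n x \<ge> deriv f 1 * (g x - 1)" by (rule Tge)
    have 3: "f (g x) \<le> \<bar>f (g x)\<bar>" "- (deriv f 1 * (g x - 1)) \<le> \<bar>deriv f 1 * (g x - 1)\<bar>"
      "0 \<le> \<bar>f (g x)\<bar>" "0 \<le> \<bar>deriv f 1 * (g x - 1)\<bar>" by auto
    show ?thesis using 1 2 3 unfolding w_def real_norm_def abs_le_iff by linarith
  qed
  have Ti: "integrable P (T n)" for n
  proof (rule Bochner_Integration.integrable_bound[OF wi Tm])
    show "AE x in P. norm (T n x) \<le> norm (w x)"
    proof (rule AE_I2)
      fix x
      have "norm (T n x) \<le> w x" by (rule Tb)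
      also have "\<dots> \<le> norm (w x)" by simp
      finally show "norm (T n x) \<le> norm (w x)" .
    qed
  qed
  have hb: "\<bar>hn n x\<bar> \<le> \<bar>deriv f (a n)\<bar> + \<bar>deriv f (b n)\<bar>" for n x
  proof -
    have "deriv f (a n) \<le> hn n x" "hn n x \<le> deriv f (b n)"
      unfolding hn_def using Fc_mono[OF f] cp ap by auto
    then show ?thesis by linarith
  qed
  have ghi: "integrable P (\<lambda>x. g x * hn n x)" for n
  proof (rule Bochner_Integration.integrable_bound)
    show "integrable P (\<lambda>x. (\<bar>deriv f (a n)\<bar> + \<bar>deriv f (b n)\<bar>) * g x)" using gi by simp
    show "(\<lambda>x. g x * hn n x) \<in> borel_measurable P" using gm hm[of n] by measurable
    show "AE x in P. norm (g x * hn n x) \<le> norm ((\<bar>deriv f (a n)\<bar> + \<bar>deriv f (b n)\<bar>) * g x)"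
      using hb gp by (auto simp: abs_mult mult.commute intro!: mult_left_mono)
  qed
  have HnT: "Hn n x = g x * hn n x - T n x" for n x
    unfolding Hn_def T_def hn_def by (simp add: algebra_simps)
  have Hi: "integrable P (Hn n)" for n
    unfolding HnT[abs_def] using ghi Ti by simp
  have fsH: "fstar f (hn n x) = ereal (Hn n x)" for n x
    unfolding hn_def Hn_def using fstar_deriv[OF f cp(1)] by simp
  have bound_n: "ereal (\<integral>x. T n x \<partial>P) \<le> (SUP h\<in>borel_measurable P. dual_obj f fsd N P h)" for n
  proof -
    have E: "eintegrable P (\<lambda>x. fstar f (hn n x))"
      unfolding eintegrable_def fsH using Hi[of n] unfolding real_integrable_def
      by (auto simp: top.not_eq_extremum)
    have eE: "eint P (\<lambda>x. fstar f (hn n x)) = ereal (\<integral>x. Hn n x \<partial>P)"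
      unfolding fsH by (rule eint_real[OF Hi])
    have Dle: "Dtilde f fsd P (hn n) \<le> ereal (\<integral>x. Hn n x \<partial>P)"
    proof (cases "integrable P (\<lambda>x. fsd (hn n x))")
      case False then show ?thesis using E eE by (simp add: Dtilde_def)
    next
      case True
      define d where "d = fder f (\<integral>x. fsd (hn n x) \<partial>P)"
      have D: "Dtilde f fsd P (hn n) = ereal (\<integral>x. Hn n x \<partial>P) + ereal d - fstar f d"
        using E True eE by (simp add: Dtilde_def d_def Let_def)
      have "ereal d \<le> fstar f d" by (rule fstar_ge_id[OF f])
      then show ?thesis unfolding D by (cases "fstar f d") auto
    qed
    have Dne: "Dtilde f fsd P (hn n) \<noteq> \<infinity>"
      using Dle by auto
    have "dual_obj f fsd N P (hn n) = ereal (\<integral>x. g x * hn n x \<partial>P) - Dtilde f fsd P (hn n)"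
      unfolding dual_obj_def using Dne eN[OF hm] eint_real[OF ghi] by simp
    also have "\<dots> \<ge> ereal ((\<integral>x. g x * hn n x \<partial>P) - (\<integral>x. Hn n x \<partial>P))"
      by (rule ereal_minus_bound[OF Dle Dne])
    moreover have "(\<integral>x. g x * hn n x \<partial>P) - (\<integral>x. Hn n x \<partial>P) = (\<integral>x. T n x \<partial>P)"
      unfolding HnT using ghi Ti by simp
    ultimately have "ereal (\<integral>x. T n x \<partial>P) \<le> dual_obj f fsd N P (hn n)" by simp
    also have "\<dots> \<le> (SUP h\<in>borel_measurable P. dual_obj f fsd N P h)"
      by (rule SUP_upper) (rule hm)
    finally show ?thesis .
  qed
  have alim: "filterlim a (at_right 0) sequentially"
  proof (rule tendsto_imp_filterlim_at_right)
    show "(a \<longlongrightarrow> 0) sequentially" unfolding a_def using LIMSEQ_inverse_real_of_nat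
      by (simp add: inverse_eq_divide)
    show "\<forall>\<^sub>F n in sequentially. 0 < a n" using ap by simp
  qed
  have lim: "AE x in P. (\<lambda>n. T n x) \<longlonglongrightarrow> f (g x)"
  proof (rule AE_I2)
    fix x assume "x \<in> space P"
    show "(\<lambda>n. T n x) \<longlonglongrightarrow> f (g x)"
    proof (cases "g x > 0")
      case True
      obtain n1 where n1: "inverse (real (Suc n1)) < g x" using reals_Archimedean[OF True] by auto
      obtain n2 where n2: "g x \<le> real n2" using real_arch_simple by auto
      have "\<forall>\<^sub>F n in sequentially. T n x = f (g x)"
        unfolding eventually_sequentially
      proof (intro exI[of _ "max n1 n2"] allI impI)
        fix n assume n: "max n1 n2 \<le> n"
        have "a n \<le> inverse (real (Suc n1))" unfolding a_def using n
          by (simp add: inverse_eq_divide frac_le)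
        moreover have "real n2 \<le> b n" unfolding b_def using n by simp
        ultimately have "c n x = g x" unfolding c_def using n1 n2 by simp
        then show "T n x = f (g x)" unfolding T_def by simp
      qed
      then show ?thesis by (rule tendsto_eventually)
    next
      case False
      then have g0: "g x = 0" using gp[of x] by simp
      have cn: "c n x = a n" for n unfolding c_def g0 using ap[of n] by simp
      have "((\<lambda>n. f (a n) - a n * deriv f (a n)) \<longlongrightarrow> f 0 - 0) sequentially"
        by (intro tendsto_intros filterlim_compose[OF Fc_right0[OF f] alim]
              filterlim_compose[OF Fc_yf'y_gen[OF f] alim])
      then show ?thesis unfolding T_def cn g0 by (simp add: algebra_simps)
    qed
  qed
  have conv: "(\<lambda>n. \<integral>x. T n x \<partial>P) \<longlonglongrightarrow> (\<integral>x. f (g x) \<partial>P)"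
    by (rule integral_dominated_convergence[OF _ Tm wi lim])
       (use Fi Tb in \<open>auto simp: integrable_iff_bounded\<close>)
  then have "(\<lambda>n. ereal (\<integral>x. T n x \<partial>P)) \<longlonglongrightarrow> ereal (\<integral>x. f (g x) \<partial>P)" by simp
  then show ?thesis
    by (rule tendsto_upperbound) (use bound_n in auto)
qed

theorem lemma4:
  fixes P N :: "'a measure" and f fsd :: "real \<Rightarrow> real"
  assumes "prob_space P"
    and "Fc f"
    and "\<And>t. fstar f t \<noteq> \<infinity> \<Longrightarrow> fstar_subgrad f t (fsd t)"
    and "prob_space N" and "sets N = sets P"
    and "fdiv f N P < \<infinity>"
  shows "fdiv f N P = (SUP h\<in>borel_measurable P. dual_obj f fsd N P h)"
proof -
  define g where "g x = enn2real (RN_deriv P N x)" for x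
  note FS = fdiv_setup[OF assms(2,1,4,5,6), folded g_def]
  note RN = RN_setup[OF assms(1,4,5) FS(1), folded g_def]
  have gm: "g \<in> borel_measurable P" using RN(1) by (simp add: g_def[abs_def])
  have gp: "\<And>x. g x \<ge> 0" unfolding g_def by simp
  show ?thesis
  proof (rule antisym)
    show "fdiv f N P \<le> (SUP h\<in>borel_measurable P. dual_obj f fsd N P h)"
      unfolding FS(3) by (rule lower_bound[OF assms(2,1) gm gp RN(3) RN(5) FS(2)])
    show "(SUP h\<in>borel_measurable P. dual_obj f fsd N P h) \<le> fdiv f N P"
      unfolding FS(3)
      by (rule SUP_least) (rule upper_bound[OF assms(2,1,3) gm gp RN(3) RN(4) RN(5) FS(2)])
  qed
qed

end
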